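(* Let $q\not\equiv0\pmod3$, $\mu\in\mathbb{F}_q$, and let $\ell_\mu$ be the line through $\mathbf{P}(0,\mu,0,1)$ and $\mathbf{P}(1,0,1,0)$. Then: (i) $\ell_\mu$ is an imaginary axis if and only if $q$ is odd, $q\equiv-1\pmod3$ and $\mu=1/9$; (ii) $\ell_\mu$ is a real axis if and only if $q$ is odd, $q\equiv1\pmod3$ and $\mu=1/9$.
   Context: Points of $\mathrm{PG}(3,q)$ are written $\mathbf{P}(x_0,x_1,x_2,x_3)$ over $\mathbb{F}_q$. For $t$ in $\mathbb{F}_q$ or $\mathbb{F}_{q^2}$ the osculating plane $\pi_{osc}(t)$ of the twisted cubic $\{\mathbf{P}(t^3,t^2,t,1)\}\cup\{\mathbf{P}(1,0,0,0)\}$ is the plane $x_0-3tx_1+3t^2x_2-t^3x_3=0$, and $\pi_{osc}(\infty)$ is $x_3=0$. A real axis is a line $\pi_{osc}(t_1)\cap\pi_{osc}(t_2)$ with $t_1\ne t_2$ in $\mathbb{F}_q\cup\{\infty\}$; an imaginary axis is a line of $\mathrm{PG}(3,q)$ of the form $\pi_{osc}(t_1)\cap\pi_{osc}(t_2)$ with $t_1,t_2=t_1^q\in\mathbb{F}_{q^2}\setminus\mathbb{F}_q$. *)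

theory Defs
  imports Main "HOL-Library.Cardinality"
begin

text \<open>Vectors of the underlying 4-dimensional space over a field; a line of PG(3,q)
  is represented by the corresponding 2-dimensional subspace (as a set of vectors).\<close>

type_synonym 'a vec4 = "'a \<times> 'a \<times> 'a \<times> 'a"

definition map4 :: "('a \<Rightarrow> 'b) \<Rightarrow> 'a vec4 \<Rightarrow> 'b vec4" where
  "map4 f x = (case x of (x0, x1, x2, x3) \<Rightarrow> (f x0, f x1, f x2, f x3))"

text \<open>Osculating plane pi_osc(t); the parameter None stands for t = infinity.\<close>
definition osc_plane :: "'a::field option \<Rightarrow> 'a vec4 set" where
  "osc_plane t = {(x0, x1, x2, x3).
     (case t of None \<Rightarrow> x3 = 0
      | Some s \<Rightarrow> x0 - 3 * s * x1 + 3 * s^2 * x2 - s^3 * x3 = 0)}"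

definition ell :: "'a::field \<Rightarrow> 'a vec4 set" where
  "ell mu = {(b, a * mu, b, a) | a b. True}"

definition real_axis :: "'a::field vec4 set \<Rightarrow> bool" where
  "real_axis L \<longleftrightarrow> (\<exists>t1 t2. t1 \<noteq> t2 \<and> L = osc_plane t1 \<inter> osc_plane t2)"

definition field_emb :: "('a::field \<Rightarrow> 'b::field) \<Rightarrow> bool" where
  "field_emb \<phi> \<longleftrightarrow> \<phi> 1 = 1 \<and> (\<forall>x y. \<phi> (x + y) = \<phi> x + \<phi> y) \<and> (\<forall>x y. \<phi> (x * y) = \<phi> x * \<phi> y)"

text \<open>Imaginary axis: a line of PG(3,q) (its vectors over F_q) whose extension is
  pi_osc(t) \<inter> pi_osc(t^q) with t in F_{q^2} \ F_q; here \<phi> embeds F_q into F_{q^2}.\<close>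
definition imag_axis :: "('a::{finite,field} \<Rightarrow> 'b::field) \<Rightarrow> 'a vec4 set \<Rightarrow> bool" where
  "imag_axis \<phi> L \<longleftrightarrow> (\<exists>t. t \<notin> range \<phi> \<and>
     L = {x. map4 \<phi> x \<in> osc_plane (Some t) \<inter> osc_plane (Some (t ^ card (UNIV :: 'a set)))})"

end

theory Submission imports Defs "HOL-Computational_Algebra.Polynomial" "HOL-Computational_Algebra.Polynomial" begin

lemma fermat1:
  fixes x :: "'a::{finite,field}"
  assumes "x \<noteq> 0"
  shows "x ^ (CARD('a) - 1) = 1"
proof -
  let ?U = "UNIV - {0::'a}"
  have inj: "inj_on (\<lambda>y. x * y) ?U" using assms by (auto simp: inj_on_def)
  have im: "(\<lambda>y. x * y) ` ?U = ?U"
  proof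
    show "(\<lambda>y. x * y) ` ?U \<subseteq> ?U" using assms by auto
    show "?U \<subseteq> (\<lambda>y. x * y) ` ?U"
    proof
      fix z assume "z \<in> ?U"
      then have "z = x * (z / x)" "z / x \<in> ?U" using assms by auto
      then show "z \<in> (\<lambda>y. x * y) ` ?U" by blast
    qed
  qed
  have "prod (\<lambda>y. y) ?U = prod (\<lambda>y. y) ((\<lambda>y. x * y) ` ?U)" using im by simp
  also have "\<dots> = prod (\<lambda>y. x * y) ?U" using prod.reindex[OF inj] by simp
  also have "\<dots> = x ^ card ?U * prod (\<lambda>y. y) ?U" by (simp add: prod.distrib)
  finally have e: "prod (\<lambda>y. y) ?U = x ^ card ?U * prod (\<lambda>y. y) ?U" .
  have nz: "prod (\<lambda>y. y) ?U \<noteq> 0" by (simp add: prod_zero_iff)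
  have c: "card ?U = CARD('a) - 1" by (simp add: card_Diff_singleton)
  from e nz show ?thesis unfolding c by simp
qed

lemma fermat2:
  fixes x :: "'a::{finite,field}"
  shows "x ^ CARD('a) = x"
proof (cases "x = 0")
  case True then show ?thesis by simp
next
  case False
  have "CARD('a) = Suc (CARD('a) - 1)" using finite_UNIV_card_ge_0[where 'a='a] by simp
  then have "x ^ CARD('a) = x * x ^ (CARD('a) - 1)" by (metis power_Suc)
  then show ?thesis using fermat1[OF False] by simp
qed

lemma card_ge2: "CARD('a::{finite,field}) \<ge> 2"
proof -
  have "card {0::'a,1} \<le> CARD('a)" by (intro card_mono) simp_all
  then show ?thesis by simp
qed

lemma char_card: "of_nat CARD('a::{finite,field}) = (0::'a)"
proof -
  have inj: "inj (\<lambda>y::'a. y + 1)" by (auto simp: inj_on_def)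
  have im: "range (\<lambda>y::'a. y + 1) = UNIV"
  proof -
    have "z = (z - 1) + 1" for z :: 'a by simp
    then show ?thesis by (metis surj_def)
  qed
  have "sum (\<lambda>y. y) (UNIV::'a set) = sum (\<lambda>y. y) (range (\<lambda>y::'a. y + 1))" using im by simp
  also have "\<dots> = sum (\<lambda>y. y + 1) UNIV" using sum.reindex[OF inj] by simp
  also have "\<dots> = sum (\<lambda>y. y) UNIV + of_nat CARD('a)" by (simp add: sum.distrib)
  finally show ?thesis by simp
qed

lemma two_ne_iff_odd: "(2::'a::{finite,field}) \<noteq> 0 \<longleftrightarrow> odd CARD('a)"
proof
  assume h: "(2::'a) \<noteq> 0"
  show "odd CARD('a)"
  proof
    assume ev: "even CARD('a)"
    have "(-1::'a) ^ (CARD('a) - 1) = 1" by (rule fermat1) simp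
    moreover have "odd (CARD('a) - 1)" using ev card_ge2[where 'a='a] by simp
    ultimately have "(-1::'a) = 1" by simp
    then have "(1::'a) + 1 = 0" by (metis add.right_inverse)
    then have "(2::'a) = 0" by simp
    with h show False by simp
  qed
next
  assume "odd CARD('a)"
  then obtain k where k: "CARD('a) = 2 * k + 1" by (metis oddE)
  have "of_nat CARD('a) = (0::'a)" by (rule char_card)
  then have "1 + (2::'a) * of_nat k = 0" unfolding k by simp
  then show "(2::'a) \<noteq> 0" by auto
qed

lemma three_ne:
  assumes "CARD('a::{finite,field}) mod 3 \<noteq> 0"
  shows "(3::'a) \<noteq> 0"
proof
  assume h: "(3::'a) = 0"
  have "CARD('a) = 3 * (CARD('a) div 3) + CARD('a) mod 3" by simp
  then have "of_nat CARD('a) = (3::'a) * of_nat (CARD('a) div 3) + of_nat (CARD('a) mod 3)"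
    by (metis of_nat_add of_nat_mult of_nat_numeral)
  then have "of_nat (CARD('a) mod 3) = (0::'a)" using h char_card[where 'a='a] by simp
  moreover have "CARD('a) mod 3 = 1 \<or> CARD('a) mod 3 = 2" using assms by linarith
  ultimately have "(1::'a) = 0 \<or> (2::'a) = 0" by auto
  then show False
  proof
    assume "(2::'a) = 0"
    then have "(3::'a) - 2 = 0" using h by simp
    then show False by simp
  qed simp
qed


lemma roots_one_bound:
  assumes "0 < m"
  shows "card {x::'a::field. x ^ m = 1} \<le> m"
proof -
  define p :: "'a poly" where "p = monom 1 m - 1"
  have "coeff p m = 1" using assms by (simp add: p_def)
  then have "p \<noteq> 0" by auto
  then have "card {x. poly p x = 0} \<le> degree p" by (rule card_poly_roots_bound)
  moreover have "degree p \<le> m" unfolding p_def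
    by (intro degree_diff_le) (auto simp: degree_monom_le)
  moreover have "{x. poly p x = 0} = {x. x ^ m = 1}" by (simp add: p_def poly_monom)
  ultimately show ?thesis by simp
qed

lemma roots_id_bound:
  assumes "1 < n"
  shows "card {x::'a::field. x ^ n = x} \<le> n"
proof -
  define p :: "'a poly" where "p = monom 1 n - monom 1 1"
  have "coeff p n = 1" using assms by (simp add: p_def)
  then have "p \<noteq> 0" by auto
  then have "card {x. poly p x = 0} \<le> degree p" by (rule card_poly_roots_bound)
  moreover have "degree p \<le> n" unfolding p_def
    using assms by (intro degree_diff_le) (auto intro: order.trans[OF degree_monom_le])
  moreover have "{x. poly p x = 0} = {x. x ^ n = x}" by (simp add: p_def poly_monom)
  ultimately show ?thesis by simp
qed

lemma exists_not_root:
  assumes "0 < m" "m + 1 < CARD('a::{finite,field})"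
  shows "\<exists>x::'a. x \<noteq> 0 \<and> x ^ m \<noteq> 1"
proof (rule ccontr)
  assume "\<not> ?thesis"
  then have "(UNIV::'a set) \<subseteq> insert 0 {x. x ^ m = 1}" by auto
  then have "CARD('a) \<le> card (insert (0::'a) {x. x ^ m = 1})" by (intro card_mono) simp_all
  also have "\<dots> \<le> Suc (card {x::'a. x ^ m = 1})" by (rule card_insert_le_m1) simp_all
  also have "\<dots> \<le> Suc m" using roots_one_bound[OF assms(1), where 'a='a] by simp
  finally show False using assms(2) by simp
qed

lemma cube_exists:
  assumes "CARD('a::{finite,field}) mod 3 = 1"
  shows "\<exists>w::'a. w ^ 3 = 1 \<and> w \<noteq> 1"
proof -
  define m where "m = (CARD('a) - 1) div 3"
  have q2: "CARD('a) \<ge> 2" by (rule card_ge2)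
  have qm: "CARD('a) - 1 = 3 * m" using assms q2 unfolding m_def by presburger
  have "0 < m" "m + 1 < CARD('a)" using qm q2 by linarith+
  then obtain x :: 'a where x: "x \<noteq> 0" "x ^ m \<noteq> 1" using exists_not_root by blast
  have "(x ^ m) ^ 3 = x ^ (3 * m)" by (simp add: power_mult[symmetric] mult.commute)
  also have "\<dots> = x ^ (CARD('a) - 1)" by (simp only: qm)
  also have "\<dots> = 1" using fermat1[OF x(1)] .
  finally show ?thesis using x(2) by blast
qed

lemma cube_none:
  assumes "CARD('a::{finite,field}) mod 3 = 2" and "(w::'a) ^ 3 = 1"
  shows "w = 1"
proof -
  have "w \<noteq> 0" using assms(2) by auto
  have q2: "CARD('a) \<ge> 2" by (rule card_ge2)
  obtain k where k: "CARD('a) - 1 = 3 * k + 1" using assms(1) q2 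
  proof -
    have "CARD('a) - 1 = 3 * ((CARD('a) - 1) div 3) + 1" using assms(1) q2 by presburger
    then show ?thesis using that by blast
  qed
  have "w ^ (CARD('a) - 1) = w ^ (3 * k + 1)" by (simp only: k)
  also have "\<dots> = (w ^ 3) ^ k * w" by (simp add: power_mult power_add)
  finally have "w ^ (CARD('a) - 1) = (w ^ 3) ^ k * w" .
  then show ?thesis using fermat1[OF \<open>w \<noteq> 0\<close>] assms(2) by simp
qed

lemma m3sq:
  assumes "(2::'a::field) \<noteq> 0" "(3::'a) \<noteq> 0"
  shows "(\<exists>s::'a. s ^ 2 = -3) \<longleftrightarrow> (\<exists>w::'a. w ^ 3 = 1 \<and> w \<noteq> 1)"
proof
  assume "\<exists>s::'a. s ^ 2 = -3"
  then obtain s :: 'a where s: "s ^ 2 = -3" by blast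
  define w where "w = (s - 1) / 2"
  have ww: "2 * w = s - 1" unfolding w_def using assms(1) by simp
  have "4 * (w ^ 2 + w + 1) = (2 * w) ^ 2 + 2 * (2 * w) + 4" by (simp add: algebra_simps power2_eq_square)
  also have "\<dots> = s ^ 2 + 3" unfolding ww by (simp add: algebra_simps power2_eq_square)
  finally have e: "4 * (w ^ 2 + w + 1) = s ^ 2 + 3" .
  have "4 * (w ^ 2 + w + 1) = 0" unfolding e s by simp
  moreover have "(4::'a) \<noteq> 0"
  proof -
    have "(4::'a) = 2 * 2" by simp
    then show ?thesis using assms(1) by (metis mult_eq_0_iff)
  qed
  ultimately have w2: "w ^ 2 + w + 1 = 0" by (metis mult_eq_0_iff)
  have "w ^ 3 - 1 = (w - 1) * (w ^ 2 + w + 1)" by (simp add: algebra_simps power2_eq_square power3_eq_cube)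
  then have "w ^ 3 = 1" using w2 by simp
  moreover have "w \<noteq> 1"
  proof
    assume "w = 1" then have "(3::'a) = 0" using w2 by simp
    with assms(2) show False by simp
  qed
  ultimately show "\<exists>w::'a. w ^ 3 = 1 \<and> w \<noteq> 1" by blast
next
  assume "\<exists>w::'a. w ^ 3 = 1 \<and> w \<noteq> 1"
  then obtain w :: 'a where w: "w ^ 3 = 1" "w \<noteq> 1" by blast
  have "(w - 1) * (w ^ 2 + w + 1) = 0" using w(1) by (simp add: algebra_simps power2_eq_square power3_eq_cube)
  then have w2: "w ^ 2 + w + 1 = 0" using w(2) by simp
  have "(2 * w + 1) ^ 2 = 4 * (w ^ 2 + w + 1) - 3" by (simp add: algebra_simps power2_eq_square)
  then have "(2 * w + 1) ^ 2 = -3" using w2 by simp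
  then show "\<exists>s::'a. s ^ 2 = -3" by blast
qed

lemma sq_count:
  assumes "odd CARD('a::{finite,field})"
  shows "2 * card ((\<lambda>x::'a. x ^ 2) ` (UNIV - {0})) = CARD('a) - 1"
proof -
  let ?S = "(\<lambda>x::'a. x ^ 2) ` (UNIV - {0})"
  have two: "(2::'a) \<noteq> 0" using assms two_ne_iff_odd by blast
  have U: "UNIV - {0} = (\<Union>y\<in>?S. {x. x ^ 2 = y})" by auto
  have each: "card {x. x ^ 2 = y} = 2" if "y \<in> ?S" for y
  proof -
    obtain r :: 'a where r: "r \<noteq> 0" "y = r ^ 2" using \<open>y \<in> ?S\<close> by auto
    have "{x. x ^ 2 = y} = {r, -r}" using r by (auto simp: power2_eq_iff)
    moreover have "r \<noteq> -r"
    proof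
      assume "r = -r" then have "2 * r = 0" by (metis add_eq_0_iff mult_2)
      with two r show False by simp
    qed
    ultimately show ?thesis by simp
  qed
  have "card (UNIV - {0::'a}) = card (\<Union>y\<in>?S. {x. x ^ 2 = y})" using U by simp
  also have "\<dots> = (\<Sum>y\<in>?S. card {x. x ^ 2 = y})" by (rule card_UN_disjoint) auto
  also have "\<dots> = (\<Sum>y\<in>?S. 2)" using each by simp
  also have "\<dots> = 2 * card ?S" by simp
  finally show ?thesis by (simp add: card_Diff_singleton)
qed

lemma euler_conv:
  assumes "odd CARD('a::{finite,field})" and "(c::'a) ^ ((CARD('a) - 1) div 2) = 1"
  shows "\<exists>r. r ^ 2 = c"
proof -
  define m where "m = (CARD('a) - 1) div 2"
  have q2: "CARD('a) \<ge> 2" by (rule card_ge2)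
  have qm: "CARD('a) - 1 = 2 * m" using assms(1) unfolding m_def by simp
  have m0: "0 < m" using qm q2 by simp
  let ?S = "(\<lambda>x::'a. x ^ 2) ` (UNIV - {0})"
  let ?R = "{x::'a. x ^ m = 1}"
  have sub: "?S \<subseteq> ?R"
  proof
    fix y assume "y \<in> ?S"
    then obtain r :: 'a where r: "r \<noteq> 0" "y = r ^ 2" by auto
    have "y ^ m = r ^ (2 * m)" by (simp add: r power_mult)
    also have "\<dots> = r ^ (CARD('a) - 1)" by (simp only: qm)
    finally have "y ^ m = r ^ (CARD('a) - 1)" .
    then show "y \<in> ?R" using fermat1[OF r(1)] by simp
  qed
  have cS: "card ?S = m" using sq_count[OF assms(1)] qm by simp
  have cR: "card ?R \<le> m" by (rule roots_one_bound[OF m0])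
  have "card ?S \<le> card ?R" by (rule card_mono) (simp_all add: sub)
  then have "card ?S = card ?R" using cS cR by linarith
  then have "?S = ?R" using sub by (intro card_subset_eq) simp_all
  moreover have "c \<in> ?R" using assms(2) unfolding m_def by simp
  ultimately have "c \<in> ?S" by simp
  then obtain r where "c = r ^ 2" by blast
  then show ?thesis by blast
qed

lemma nonsq_pow:
  assumes "odd CARD('a::{finite,field})" "(c::'a) \<noteq> 0" "\<not> (\<exists>r. r ^ 2 = c)"
  shows "c ^ ((CARD('a) - 1) div 2) = -1"
proof -
  have qm: "CARD('a) - 1 = 2 * ((CARD('a) - 1) div 2)" using assms(1) by simp
  have "(c ^ ((CARD('a) - 1) div 2)) ^ 2 = c ^ (CARD('a) - 1)"
    by (subst qm) (simp add: power_mult[symmetric] mult.commute)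
  also have "\<dots> = 1" by (rule fermat1[OF assms(2)])
  finally have "c ^ ((CARD('a) - 1) div 2) = 1 \<or> c ^ ((CARD('a) - 1) div 2) = -1"
    by (simp add: power2_eq_1_iff)
  then show ?thesis using euler_conv[OF assms(1)] assms(3) by blast
qed


context
  fixes \<phi> :: "'a::field \<Rightarrow> 'b::field"
  assumes fe: "field_emb \<phi>"
begin

lemma phi_add: "\<phi> (x + y) = \<phi> x + \<phi> y" using fe by (simp add: field_emb_def)
lemma phi_mult: "\<phi> (x * y) = \<phi> x * \<phi> y" using fe by (simp add: field_emb_def)
lemma phi_1: "\<phi> 1 = 1" using fe by (simp add: field_emb_def)

lemma phi_0: "\<phi> 0 = 0"
proof -
  have "\<phi> 0 = \<phi> 0 + \<phi> 0" using phi_add[of 0 0] by simp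
  then show ?thesis by (metis add_cancel_right_right)
qed

lemma phi_neg: "\<phi> (- x) = - \<phi> x"
proof -
  have "\<phi> (x + - x) = \<phi> x + \<phi> (- x)" by (rule phi_add)
  then show ?thesis using phi_0 by (simp add: eq_neg_iff_add_eq_0 add.commute)
qed

lemma phi_diff: "\<phi> (x - y) = \<phi> x - \<phi> y"
  using phi_add[of x "- y"] phi_neg[of y] by simp

lemma phi_inverse: "\<phi> (inverse x) = inverse (\<phi> x)"
proof (cases "x = 0")
  case True then show ?thesis using phi_0 by simp
next
  case False
  have "\<phi> x * \<phi> (inverse x) = 1" using phi_mult[of x "inverse x"] phi_1 False by simp
  then show ?thesis by (metis inverse_unique)
qed

lemma phi_divide: "\<phi> (x / y) = \<phi> x / \<phi> y"
  by (simp add: divide_inverse phi_mult phi_inverse)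

lemma phi_power: "\<phi> (x ^ n) = \<phi> x ^ n"
  by (induction n) (simp_all add: phi_1 phi_mult)

lemma phi_of_nat: "\<phi> (of_nat n) = of_nat n"
  by (induction n) (simp_all add: phi_0 phi_1 phi_add)

lemma phi_numeral: "\<phi> (numeral n) = numeral n"
  using phi_of_nat[of "numeral n"] by simp

lemma phi_eq_0: "\<phi> x = 0 \<longleftrightarrow> x = 0"
proof
  assume h: "\<phi> x = 0"
  show "x = 0"
  proof (rule ccontr)
    assume "x \<noteq> 0"
    then have "\<phi> x * \<phi> (inverse x) = 1" using phi_mult[of x "inverse x"] phi_1 by simp
    with h show False by simp
  qed
qed (simp add: phi_0)

lemma phi_inj: "inj \<phi>"
proof (rule injI)
  fix x y assume "\<phi> x = \<phi> y"
  then have "\<phi> (x - y) = 0" by (simp add: phi_diff)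
  then show "x = y" by (simp add: phi_eq_0)
qed

lemma phi_eq_iff: "\<phi> x = \<phi> y \<longleftrightarrow> x = y"
  using phi_inj by (auto dest: injD)

end

lemma frob_fixed:
  fixes \<phi> :: "'a::{finite,field} \<Rightarrow> 'b::{finite,field}"
  assumes fe: "field_emb \<phi>" and y: "y ^ CARD('a) = y"
  shows "y \<in> range \<phi>"
proof -
  let ?R = "{z::'b. z ^ CARD('a) = z}"
  have q2: "1 < CARD('a)" using card_ge2[where 'a='a] by simp
  have "\<phi> x ^ CARD('a) = \<phi> x" for x
    using fermat2[of x] phi_power[OF fe, of x "CARD('a)"] by simp
  then have sub: "range \<phi> \<subseteq> ?R" by auto
  have c1: "card (range \<phi>) = CARD('a)" using phi_inj[OF fe] by (simp add: card_image)
  have c2: "card ?R \<le> CARD('a)" by (rule roots_id_bound[OF q2])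
  have fin: "finite ?R" by simp
  have "card (range \<phi>) = card ?R" using card_mono[OF fin sub] c1 c2 by simp
  then have "range \<phi> = ?R" using card_subset_eq[OF fin sub] by simp
  then show ?thesis using y by simp
qed


lemma nine_ne: "(3::'c::field) \<noteq> 0 \<Longrightarrow> (9::'c) \<noteq> 0"
proof -
  assume "(3::'c) \<noteq> 0"
  moreover have "(9::'c) = 3 * 3" by simp
  ultimately show ?thesis by (metis mult_eq_0_iff)
qed

lemma ell_mem: "(x0, x1, x2, x3) \<in> ell \<mu> \<longleftrightarrow> x0 = x2 \<and> x1 = x3 * \<mu>"
  by (auto simp: ell_def)

lemma osc_Some: "(x0, x1, x2, x3) \<in> osc_plane (Some s) \<longleftrightarrow>
    x0 - 3 * s * x1 + 3 * s^2 * x2 - s^3 * x3 = 0"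
  by (simp add: osc_plane_def)

lemma osc_None: "(x0, x1, x2, x3) \<in> osc_plane None \<longleftrightarrow> x3 = 0"
  by (simp add: osc_plane_def)

lemma plane_pair:
  fixes s :: "'c::field"
  assumes two: "(2::'c) \<noteq> 0" and s2: "s ^ 2 = - 1/3" and s0: "s \<noteq> 0"
  shows "(x0 - 3 * s * x1 + 3 * s^2 * x2 - s^3 * x3 = 0 \<and>
          x0 - 3 * (- s) * x1 + 3 * (- s)^2 * x2 - (- s)^3 * x3 = 0)
     \<longleftrightarrow> (x0 = x2 \<and> x1 = x3 * (1/9))"
proof -
  have three: "(3::'c) \<noteq> 0" using s2 s0 by auto
  have h3: "3 * s^2 + 1 = 0" using s2 three by (simp add: field_simps)
  define A where "A = x0 - x2"
  define B where "B = 3 * x1 + s^2 * x3"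
  have e1: "x0 - 3 * s * x1 + 3 * s^2 * x2 - s^3 * x3 = A - s * B + (3 * s^2 + 1) * x2"
    unfolding A_def B_def by (simp add: algebra_simps power2_eq_square power3_eq_cube)
  have e2: "x0 - 3 * (- s) * x1 + 3 * (- s)^2 * x2 - (- s)^3 * x3 = A + s * B + (3 * s^2 + 1) * x2"
    unfolding A_def B_def by (simp add: algebra_simps power2_eq_square power3_eq_cube)
  have "(A - s * B = 0 \<and> A + s * B = 0) \<longleftrightarrow> (A = 0 \<and> B = 0)"
  proof
    assume h: "A - s * B = 0 \<and> A + s * B = 0"
    have "A + A = (A - s * B) + (A + s * B)" by (simp add: algebra_simps)
    then have "A + A = 0" using h by (metis add.right_neutral)
    then have "2 * A = 0" by (metis mult_2)
    then have "A = 0" using two by simp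
    then have "s * B = 0" using h by simp
    then show "A = 0 \<and> B = 0" using s0 \<open>A = 0\<close> by simp
  qed simp
  moreover have "B = 0 \<longleftrightarrow> x1 = x3 * (1/9)"
  proof -
    have "B = 3 * x1 - x3 / 3" unfolding B_def s2 by (simp add: field_simps)
    moreover have "(9::'c) \<noteq> 0"
    proof -
      have "(9::'c) = 3 * 3" by simp
      then show ?thesis using three by (metis mult_eq_0_iff)
    qed
    ultimately show ?thesis using three by (auto simp: field_simps)
  qed
  ultimately show ?thesis unfolding e1 e2 h3 A_def by simp
qed


lemma pt1: "(1, 0, 1, 0) \<in> ell \<mu>" by (simp add: ell_mem)
lemma pt2: "(0, \<mu>, 0, 1) \<in> ell \<mu>" by (simp add: ell_mem)

lemma sub_Some:
  assumes "ell \<mu> \<subseteq> osc_plane (Some s)"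
  shows "1 + 3 * s^2 = 0" "s * (3 * \<mu> + s^2) = 0"
proof -
  show "1 + 3 * s^2 = 0" using assms pt1[of \<mu>] by (auto simp: osc_Some)
  have e: "0 - 3 * s * \<mu> + 3 * s^2 * 0 - s^3 * 1 = 0" using assms pt2[of \<mu>] osc_Some by blast
  have "s * (3 * \<mu> + s^2) = - (0 - 3 * s * \<mu> + 3 * s^2 * 0 - s^3 * 1)"
    by (simp add: algebra_simps power2_eq_square power3_eq_cube)
  moreover have "- (0 - 3 * s * \<mu> + 3 * s^2 * 0 - s^3 * 1) = 0" using e by simp
  ultimately show "s * (3 * \<mu> + s^2) = 0" by (simp only:)
qed

lemma sol_facts:
  fixes s \<mu> :: "'c::field"
  assumes "1 + 3 * s^2 = 0" "s * (3 * \<mu> + s^2) = 0"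
  shows "(3::'c) \<noteq> 0" "s \<noteq> 0" "s^2 = -1/3" "\<mu> = 1/9"
proof -
  show t: "(3::'c) \<noteq> 0" using assms(1) by auto
  show s0: "s \<noteq> 0" using assms(1) by auto
  have m: "3 * s^2 = -1" using assms(1) by (simp add: eq_neg_iff_add_eq_0 add.commute)
  have "s^2 = (3 * s^2) / 3" using t by simp
  also have "\<dots> = -1/3" using m by simp
  finally show s2: "s^2 = -1/3" .
  have "3 * \<mu> + s^2 = 0" using assms(2) s0 by simp
  then show "\<mu> = 1/9" using s2 t nine_ne[OF t] by (simp add: field_simps)
qed

lemma real_iff:
  assumes q3: "CARD('a::{finite,field}) mod 3 \<noteq> 0"
  shows "real_axis (ell (\<mu>::'a)) \<longleftrightarrow> odd CARD('a) \<and> CARD('a) mod 3 = 1 \<and> \<mu> = 1/9"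
proof
  assume "real_axis (ell \<mu>)"
  then obtain t1 t2 where t: "t1 \<noteq> t2" "ell \<mu> = osc_plane t1 \<inter> osc_plane t2"
    unfolding real_axis_def by blast
  have notNone: "t \<noteq> None" if "ell \<mu> \<subseteq> osc_plane t" for t
  proof
    assume "t = None"
    then show False using that pt2[of \<mu>] by (auto simp: osc_None)
  qed
  obtain s1 where s1: "t1 = Some s1" using notNone[of t1] t(2) by auto
  obtain s2 where s2: "t2 = Some s2" using notNone[of t2] t(2) by auto
  have i1: "ell \<mu> \<subseteq> osc_plane (Some s1)" using t(2) s1 by auto
  have i2: "ell \<mu> \<subseteq> osc_plane (Some s2)" using t(2) s2 by auto
  note f1 = sol_facts[OF sub_Some[OF i1]]
  note f2 = sol_facts[OF sub_Some[OF i2]]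
  have "s1 \<noteq> s2" using t(1) s1 s2 by simp
  moreover have "s1^2 = s2^2" using f1(3) f2(3) by simp
  ultimately have "s2 = - s1" by (auto simp: power2_eq_iff)
  then have "s1 \<noteq> - s1" using \<open>s1 \<noteq> s2\<close> by simp
  then have two: "(2::'a) \<noteq> 0"
    by (metis add.inverse_unique add_eq_0_iff mult_2 mult_zero_left)
  then have odd: "odd CARD('a)" using two_ne_iff_odd by blast
  have "(3 * s1)^2 = 9 * s1^2" by (simp add: power_mult_distrib)
  also have "\<dots> = -3" using f1(3) by simp
  finally have "\<exists>s::'a. s^2 = -3" by blast
  then obtain w :: 'a where w: "w^3 = 1" "w \<noteq> 1" using m3sq[OF two f1(1)] by blast
  have "CARD('a) mod 3 \<noteq> 2" using cube_none w by blast
  then have "CARD('a) mod 3 = 1" using q3 by linarith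
  then show "odd CARD('a) \<and> CARD('a) mod 3 = 1 \<and> \<mu> = 1/9" using odd f1(4) by simp
next
  assume h: "odd CARD('a) \<and> CARD('a) mod 3 = 1 \<and> \<mu> = 1/9"
  have two: "(2::'a) \<noteq> 0" using h two_ne_iff_odd by blast
  have three: "(3::'a) \<noteq> 0" by (rule three_ne[OF q3])
  obtain s0 :: 'a where s0: "s0^2 = -3" using m3sq[OF two three] cube_exists h by blast
  define s where "s = s0 / 3"
  have "s^2 = s0^2 / (3*3)" unfolding s_def by (simp add: power_divide power2_eq_square)
  also have "\<dots> = -3/(3*3)" using s0 by simp
  also have "\<dots> = -1/3" using three nine_ne[OF three] by (simp add: field_simps)
  finally have ss: "s^2 = -1/3" .
  have sn0: "s \<noteq> 0" using ss three by auto
  have "s \<noteq> - s"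
  proof
    assume "s = - s"
    then have "2 * s = 0" by (metis add_eq_0_iff mult_2)
    with two sn0 show False by simp
  qed
  have "ell \<mu> = osc_plane (Some s) \<inter> osc_plane (Some (- s))"
  proof (rule set_eqI)
    fix x :: "'a vec4"
    obtain x0 x1 x2 x3 where x: "x = (x0, x1, x2, x3)" by (cases x) auto
    show "x \<in> ell \<mu> \<longleftrightarrow> x \<in> osc_plane (Some s) \<inter> osc_plane (Some (- s))"
      unfolding x ell_mem Int_iff osc_Some plane_pair[OF two ss sn0] using h by (simp only:)
  qed
  then show "real_axis (ell \<mu>)" unfolding real_axis_def using \<open>s \<noteq> - s\<close> by blast
qed


lemma pts_Some1: "(1, 0, 1, 0) \<in> osc_plane (Some s) \<Longrightarrow> 1 + 3 * s^2 = 0"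
  by (simp add: osc_Some)

lemma pts_Some2:
  assumes "(0, m, 0, 1) \<in> osc_plane (Some s)"
  shows "s * (3 * m + s^2) = 0"
proof -
  have e: "0 - 3 * s * m + 3 * s^2 * 0 - s^3 * 1 = 0" using assms osc_Some by blast
  have "s * (3 * m + s^2) = - (0 - 3 * s * m + 3 * s^2 * 0 - s^3 * 1)"
    by (simp add: algebra_simps power2_eq_square power3_eq_cube)
  moreover have "- (0 - 3 * s * m + 3 * s^2 * 0 - s^3 * 1) = 0" using e by simp
  ultimately show ?thesis by (simp only:)
qed

lemma third_sq:
  fixes s0 :: "'c::field"
  assumes "(3::'c::field) \<noteq> 0" "s0 ^ 2 = -3"
  shows "(s0 / 3) ^ 2 = -1/3"
proof -
  have "(s0 / 3)^2 = s0^2 / 3^2" by (rule power_divide)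
  also have "\<dots> = -3/3^2" using assms(2) by simp
  also have "\<dots> = -1/3" using assms(1) nine_ne[OF assms(1)] by (simp add: field_simps)
  finally show ?thesis .
qed

lemma map4_simp: "map4 f (x0, x1, x2, x3) = (f x0, f x1, f x2, f x3)"
  by (simp add: map4_def)

lemma imag_iff:
  fixes \<phi> :: "'a::{finite,field} \<Rightarrow> 'b::{finite,field}" and \<mu> :: 'a
  assumes q3: "CARD('a) mod 3 \<noteq> 0" and qb: "CARD('b) = CARD('a)^2" and fe: "field_emb \<phi>"
  shows "imag_axis \<phi> (ell \<mu>) \<longleftrightarrow> odd CARD('a) \<and> CARD('a) mod 3 = 2 \<and> \<mu> = 1/9"
proof
  have p9: "\<phi> (1/9) = 1/9" by (simp add: phi_divide[OF fe] phi_1[OF fe] phi_numeral[OF fe])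
  have p3: "\<phi> (-1/3) = -1/3" by (simp add: phi_divide[OF fe] phi_neg[OF fe] phi_1[OF fe] phi_numeral[OF fe])
  assume "imag_axis \<phi> (ell \<mu>)"
  then obtain t where t: "t \<notin> range \<phi>"
    and L: "ell \<mu> = {x. map4 \<phi> x \<in> osc_plane (Some t) \<inter> osc_plane (Some (t ^ CARD('a)))}"
    unfolding imag_axis_def by blast
  have "map4 \<phi> (1, 0, 1, 0) \<in> osc_plane (Some t)" using L pt1[of \<mu>] by blast
  then have a1: "1 + 3 * t^2 = 0" by (intro pts_Some1) (simp add: map4_simp phi_0[OF fe] phi_1[OF fe])
  have "map4 \<phi> (0, \<mu>, 0, 1) \<in> osc_plane (Some t)" using L pt2[of \<mu>] by blast
  then have a2: "t * (3 * \<phi> \<mu> + t^2) = 0" by (intro pts_Some2) (simp add: map4_simp phi_0[OF fe] phi_1[OF fe])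
  note f = sol_facts[OF a1 a2]
  have mu: "\<mu> = 1/9" using f(4) p9 phi_eq_iff[OF fe] by metis
  have two: "(2::'a) \<noteq> 0"
  proof
    assume "(2::'a) = 0"
    then have b2: "(2::'b) = 0" using phi_numeral[OF fe, of "num.Bit0 num.One"] phi_0[OF fe] by simp
    have "(1 + t)^2 = (1 + 3 * t^2) - 2 * t^2 + 2 * t" by (simp add: algebra_simps power2_eq_square)
    also have "\<dots> = 0" using a1 b2 by simp
    finally have "1 + t = 0" by simp
    then have "t = \<phi> (-1)" using phi_neg[OF fe] phi_1[OF fe] by (metis add.commute add_eq_0_iff)
    with t show False by simp
  qed
  then have odd: "odd CARD('a)" using two_ne_iff_odd by blast
  have "CARD('a) mod 3 \<noteq> 1"
  proof
    assume "CARD('a) mod 3 = 1"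
    then obtain s0 :: 'a where s0: "s0^2 = -3" using m3sq[OF two three_ne[OF q3]] cube_exists by blast
    define r where "r = s0 / 3"
    have "r^2 = -1/3" unfolding r_def by (rule third_sq[OF three_ne[OF q3] s0])
    then have "\<phi> r ^ 2 = t ^ 2" using f(3) p3 phi_power[OF fe, of r 2] by simp
    then have "t = \<phi> r \<or> t = - \<phi> r" by (auto simp: power2_eq_iff)
    then have "t \<in> range \<phi>" using phi_neg[OF fe, of r] by (metis rangeI)
    with t show False by simp
  qed
  then have "CARD('a) mod 3 = 2" using q3 by linarith
  then show "odd CARD('a) \<and> CARD('a) mod 3 = 2 \<and> \<mu> = 1/9" using odd mu by simp
next
  have p9: "\<phi> (1/9) = 1/9" by (simp add: phi_divide[OF fe] phi_1[OF fe] phi_numeral[OF fe])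
  have p3: "\<phi> (-1/3) = -1/3" by (simp add: phi_divide[OF fe] phi_neg[OF fe] phi_1[OF fe] phi_numeral[OF fe])
  assume h: "odd CARD('a) \<and> CARD('a) mod 3 = 2 \<and> \<mu> = 1/9"
  have two: "(2::'a) \<noteq> 0" using h two_ne_iff_odd by blast
  have three: "(3::'a) \<noteq> 0" by (rule three_ne[OF q3])
  define c :: 'a where "c = -1/3"
  have c0: "c \<noteq> 0" unfolding c_def using three by simp
  have nsq: "\<not> (\<exists>r. r^2 = c)"
  proof
    assume "\<exists>r. r^2 = c"
    then obtain r where r: "r^2 = c" by blast
    have "(3 * r)^2 = 9 * r^2" by (simp add: power_mult_distrib)
    also have "\<dots> = -3" unfolding r c_def using three nine_ne[OF three] by (simp add: field_simps)
    finally have "\<exists>s::'a. s^2 = -3" by blast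
    then obtain w :: 'a where "w^3 = 1" "w \<noteq> 1" using m3sq[OF two three] by blast
    then show False using cube_none h by blast
  qed
  obtain k where k: "CARD('a) = 2 * k + 1" using h by (metis oddE)
  have k1: "k \<ge> 1" using k card_ge2[where 'a='a] by simp
  define M where "M = (CARD('b) - 1) div 2"
  have QM: "CARD('b) - 1 = (2 * k + 2) * (2 * k)" unfolding qb k by (simp add: power2_eq_square algebra_simps)
  have M: "M = (2 * k + 2) * k" unfolding M_def QM by simp
  have "0 < M" "M + 1 < CARD('b)" using k1 QM M by (simp_all add: algebra_simps)
  then obtain y :: 'b where y: "y \<noteq> 0" "y ^ M \<noteq> 1" using exists_not_root by blast
  define w where "w = y ^ (2 * k + 2)"
  have w0: "w \<noteq> 0" unfolding w_def using y(1) by simp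
  have "w ^ (2 * k) = y ^ ((2 * k + 2) * (2 * k))" unfolding w_def by (simp only: power_mult)
  also have "\<dots> = y ^ (CARD('b) - 1)" by (simp only: QM)
  also have "\<dots> = 1" by (rule fermat1[OF y(1)])
  finally have w2k: "w ^ (2 * k) = 1" .
  have "w ^ CARD('a) = w ^ (2 * k) * w" unfolding k by simp
  then have "w ^ CARD('a) = w" using w2k by simp
  then have "w \<in> range \<phi>" by (rule frob_fixed[OF fe])
  then obtain w' where w': "w = \<phi> w'" by blast
  have w'0: "w' \<noteq> 0" using w0 w' phi_0[OF fe] by auto
  have "\<phi> (w' ^ k) = y ^ M" by (simp only: phi_power[OF fe] w'[symmetric] w_def M power_mult)
  then have "w' ^ k \<noteq> 1" using y(2) phi_1[OF fe] by auto
  moreover have "(w' ^ k) ^ 2 = 1"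
  proof -
    have "(w' ^ k) ^ 2 = w' ^ (CARD('a) - 1)" unfolding k by (simp add: power_mult[symmetric] mult.commute)
    then show ?thesis using fermat1[OF w'0] by simp
  qed
  ultimately have wk: "w' ^ k = -1" by (simp add: power2_eq_1_iff)
  have kk: "k = (CARD('a) - 1) div 2" unfolding k by simp
  have ck: "c ^ k = -1" unfolding kk by (rule nonsq_pow[OF conjunct1[OF h] c0 nsq])
  have "(c / w') ^ ((CARD('a) - 1) div 2) = 1" unfolding kk[symmetric] power_divide ck wk by simp
  then obtain r where r: "r^2 = c / w'" using euler_conv h by blast
  define t where "t = \<phi> r * y ^ (k + 1)"
  have e22: "(k + 1) * 2 = 2 * k + 2" by simp
  have "t^2 = \<phi> r ^ 2 * (y ^ (k + 1)) ^ 2" unfolding t_def by (rule power_mult_distrib)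
  also have "\<dots> = \<phi> (r^2) * y ^ (2 * k + 2)"
    by (simp only: phi_power[OF fe] power_mult[symmetric] e22)
  finally have "t^2 = \<phi> (r^2) * y ^ (2 * k + 2)" .
  also have "\<dots> = \<phi> (c / w') * \<phi> w'" unfolding r w'[symmetric] w_def ..
  also have "\<dots> = \<phi> c" unfolding phi_mult[OF fe, symmetric] using w'0 by simp
  finally have t2: "t^2 = \<phi> c" .
  have tn: "t \<notin> range \<phi>"
  proof
    assume "t \<in> range \<phi>"
    then obtain r' where "t = \<phi> r'" by blast
    then have "\<phi> (r'^2) = \<phi> c" using t2 phi_power[OF fe] by simp
    then have "r'^2 = c" using phi_eq_iff[OF fe] by blast
    with nsq show False by blast
  qed
  have "(t ^ CARD('a))^2 = t^2"
  proof -
    have "(t ^ CARD('a))^2 = (t^2) ^ CARD('a)" by (simp add: power_mult[symmetric] mult.commute)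
    also have "\<dots> = \<phi> (c ^ CARD('a))" unfolding t2 phi_power[OF fe] ..
    also have "\<dots> = t^2" using fermat2[of c] t2 by simp
    finally show ?thesis .
  qed
  then have "t ^ CARD('a) = t \<or> t ^ CARD('a) = - t" by (simp add: power2_eq_iff)
  moreover have "t ^ CARD('a) \<noteq> t" using frob_fixed[OF fe] tn by blast
  ultimately have tq: "t ^ CARD('a) = - t" by blast
  have t0: "t \<noteq> 0" using tn phi_0[OF fe] by (metis rangeI)
  have tt: "t^2 = -1/3" using t2 p3 unfolding c_def by simp
  have twob: "(2::'b) \<noteq> 0" using two phi_numeral[OF fe, of "num.Bit0 num.One"] phi_eq_0[OF fe, of 2] by simp
  have "ell \<mu> = {x. map4 \<phi> x \<in> osc_plane (Some t) \<inter> osc_plane (Some (t ^ CARD('a)))}"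
  proof (rule set_eqI)
    fix x :: "'a vec4"
    obtain x0 x1 x2 x3 where x: "x = (x0, x1, x2, x3)" by (cases x) auto
    have e9: "\<phi> x3 * (1/9) = \<phi> (x3 * (1/9))" by (simp only: phi_mult[OF fe] p9)
    have mu: "\<mu> = 1/9" using h by simp
    show "x \<in> ell \<mu> \<longleftrightarrow> x \<in> {x. map4 \<phi> x \<in> osc_plane (Some t) \<inter> osc_plane (Some (t ^ CARD('a)))}"
      unfolding x ell_mem mem_Collect_eq map4_simp Int_iff tq osc_Some plane_pair[OF twob tt t0]
      by (simp only: e9 mu phi_eq_iff[OF fe])
  qed
  then show "imag_axis \<phi> (ell \<mu>)" unfolding imag_axis_def using tn by blast
qed

theorem lemma4p3:
  fixes \<phi> :: "'a::{finite,field} \<Rightarrow> 'b::{finite,field}" and \<mu> :: 'a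
  assumes "CARD('a) mod 3 \<noteq> 0"
    and "CARD('b) = CARD('a)^2"
    and "field_emb \<phi>"
  shows "(imag_axis \<phi> (ell \<mu>) \<longleftrightarrow> odd CARD('a) \<and> CARD('a) mod 3 = 2 \<and> \<mu> = 1/9)
       \<and> (real_axis (ell \<mu>) \<longleftrightarrow> odd CARD('a) \<and> CARD('a) mod 3 = 1 \<and> \<mu> = 1/9)"
  using imag_iff[OF assms] real_iff[OF assms(1)] by blast

end
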